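(* Let $X$ be a real random variable with $\mathbb{E}X^2<\infty$ and let $(X_{i,k})_{1\le i\le k}$ be a triangular array of i.i.d. random variables distributed as $X$. For $k\ge1$ set \[ \tilde T_k=\sum_{i=1}^k\Big(X_{i,k}\mathbf{1}_{\{|X_{i,k}|\le k\}}-\mathbb{E}\big[X_{i,k}\mathbf{1}_{\{|X_{i,k}|\le k\}}\big]\Big). \] Then for every $p>2$, \[ \mathbb{E}\sum_{k=1}^\infty\left(\frac{|\tilde T_k|}{k}\right)^p<\infty. \] *)

theory Defs
  imports "HOL-Probability.Probability"
begin

definition trunc_at :: "nat \<Rightarrow> real \<Rightarrow> real" where
  "trunc_at k x = (if \<bar>x\<bar> \<le> real k then x else 0)"

definition centered_trunc_sum ::
  "'a measure \<Rightarrow> (nat \<Rightarrow> nat \<Rightarrow> 'a \<Rightarrow> real) \<Rightarrow> nat \<Rightarrow> 'a \<Rightarrow> real" where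
  "centered_trunc_sum M Xa k \<omega> =
     (\<Sum>i=1..k. trunc_at k (Xa i k \<omega>) - (\<integral>\<eta>. trunc_at k (Xa i k \<eta>) \<partial>M))"

end

theory Submission
  imports Defs
begin


lemma taylor_pos:
  fixes a b p :: real
  assumes p: "p \<ge> 2" and a: "a > 0" and b: "\<bar>b\<bar> \<le> a/2"
  shows "(a+b) powr p \<le> a powr p + p * a powr (p-1) * b + p*p*2 powr p * a powr (p-2) * b^2"
proof (cases "b = 0")
  case True then show ?thesis by simp
next
  case False
  define diff :: "nat \<Rightarrow> real \<Rightarrow> real" where
    "diff = (\<lambda>m x. if m = 0 then x powr p else if m = 1 then p * x powr (p-1) else p*(p-1)* x powr (p-2))"
  have D: "\<forall>m t. m < 2 \<and> a/2 \<le> t \<and> t \<le> 3*a/2 \<longrightarrow> DERIV (diff m) t :> diff (Suc m) t"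
  proof (intro allI impI)
    fix m :: nat and t assume h: "m < 2 \<and> a/2 \<le> t \<and> t \<le> 3*a/2"
    then have t: "t > 0" using a by auto
    have "m = 0 \<or> m = 1" using h by auto
    then show "DERIV (diff m) t :> diff (Suc m) t"
    proof
      assume "m = 0"
      then show ?thesis using t by (auto simp: diff_def intro!: derivative_eq_intros)
    next
      assume "m = 1"
      then show ?thesis using t
        by (auto simp: diff_def intro!: derivative_eq_intros simp: algebra_simps)
    qed
  qed
  have h1: "a/2 \<le> a+b" "a+b \<le> 3*a/2" using b by (auto simp: abs_le_iff)
  have "\<exists>t. (if a+b < a then a+b < t \<and> t < a else a < t \<and> t < a+b) \<and>
     diff 0 (a+b) = (\<Sum>m<2. (diff m a / fact m) * (a+b - a)^m) + (diff 2 t / fact 2) * (a+b - a)^2"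
    by (rule Taylor[of 2 diff "diff 0" "a/2" "3*a/2" a "a+b", OF _ refl D]) (use h1 a False in auto)
  then obtain t where t: "(if a+b < a then a+b < t \<and> t < a else a < t \<and> t < a+b)"
    and eq: "diff 0 (a+b) = (\<Sum>m<2. (diff m a / fact m) * (a+b - a)^m) + (diff 2 t / fact 2) * (a+b - a)^2"
    by blast
  have tpos: "t > 0" and tle: "t \<le> 2 * a" using t a b by (auto split: if_splits)
  have "t powr (p-2) \<le> (2*a) powr (p-2)" using tpos tle p by (intro powr_mono2) auto
  also have "\<dots> = 2 powr (p-2) * a powr (p-2)" using a by (simp add: powr_mult)
  also have "\<dots> \<le> 2 powr p * a powr (p-2)"
    by (intro mult_right_mono powr_mono) auto
  finally have tb: "t powr (p-2) \<le> 2 powr p * a powr (p-2)" .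
  have "diff 2 t / fact 2 * b^2 = p*(p-1)/2 * t powr (p-2) * b^2"
    by (simp add: diff_def fact_numeral)
  also have "\<dots> \<le> p*p * (2 powr p * a powr (p-2)) * b^2"
  proof -
    have "p*(p-1) \<le> p*(2*p)" by (rule mult_left_mono) (use p in auto)
    then have "p*(p-1)/2 \<le> p*p" by simp
    moreover have "0 \<le> p*(p-1)/2" using p by simp
    ultimately have "p*(p-1)/2 * t powr (p-2) \<le> p*p * (2 powr p * a powr (p-2))"
      using tb by (intro mult_mono) auto
    then show ?thesis by (intro mult_right_mono) auto
  qed
  finally have R: "diff 2 t / fact 2 * b^2 \<le> p*p * (2 powr p * a powr (p-2)) * b^2" .
  have "(a+b) powr p = a powr p + p * a powr (p-1) * b + diff 2 t / fact 2 * b^2"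
    using eq by (simp add: diff_def numeral_2_eq_2 lessThan_Suc)
  then show ?thesis using R by simp
qed

definition Cp :: "real \<Rightarrow> real" where "Cp p = p*p*2 powr p + 3 powr p + p * 2 powr p"

lemma powr_pm1: "x \<ge> 0 \<Longrightarrow> (x::real) powr (q-1) * x = x powr q"
  by (metis diff_add_cancel powr_add powr_one)

lemma pw_ineq:
  fixes a b p :: real
  assumes p: "p \<ge> 2"
  shows "\<bar>a+b\<bar> powr p \<le> \<bar>a\<bar> powr p + p * \<bar>a\<bar> powr (p-2) * a * b
          + Cp p * (\<bar>a\<bar> powr (p-2) * b^2 + \<bar>b\<bar> powr p)"
proof -
  have nn: "0 \<le> \<bar>a\<bar> powr (p-2) * b^2" "0 \<le> \<bar>b\<bar> powr p" by auto
  have C1: "p*p*2 powr p \<le> Cp p" and C2: "3 powr p + p * 2 powr p \<le> Cp p"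
    using p unfolding Cp_def by auto
  have Cnn: "0 \<le> Cp p" unfolding Cp_def using p by (intro add_nonneg_nonneg mult_nonneg_nonneg) auto
  have key: "\<bar>a+b\<bar> powr p \<le> \<bar>a\<bar> powr p + p * \<bar>a\<bar> powr (p-2) * a * b
          + p*p*2 powr p * \<bar>a\<bar> powr (p-2) * b^2" if ab: "\<bar>b\<bar> \<le> \<bar>a\<bar>/2" "a \<noteq> 0"
  proof (cases "a > 0")
    case True
    have "a+b \<ge> 0" using ab True by auto
    then have "\<bar>a+b\<bar> powr p = (a+b) powr p" by simp
    also have "\<dots> \<le> a powr p + p * a powr (p-1) * b + p*p*2 powr p * a powr (p-2) * b^2"
      using taylor_pos[OF p True] ab True by auto
    also have "a powr (p-1) = a powr (p-2) * a" using True
      by (metis powr_pm1 diff_diff_eq less_eq_real_def one_add_one)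
    finally show ?thesis using True by (simp add: mult.assoc)
  next
    case False
    then have an: "-a > 0" using ab by auto
    have "-(a+b) \<ge> 0" using ab an by auto
    then have "\<bar>a+b\<bar> powr p = ((-a)+(-b)) powr p" by simp
    also have "\<dots> \<le> (-a) powr p + p * (-a) powr (p-1) * (-b) + p*p*2 powr p * (-a) powr (p-2) * (-b)^2"
      using taylor_pos[OF p an, of "-b"] ab an by auto
    also have "(-a) powr (p-1) = (-a) powr (p-2) * (-a)" using an
      by (metis powr_pm1 diff_diff_eq less_eq_real_def one_add_one)
    finally show ?thesis using an by (simp add: mult.assoc)
  qed
  show ?thesis
  proof (cases "\<bar>b\<bar> \<le> \<bar>a\<bar>/2 \<and> a \<noteq> 0")
    case True
    have "p*p*2 powr p * \<bar>a\<bar> powr (p-2) * b^2 = (p*p*2 powr p) * (\<bar>a\<bar> powr (p-2) * b^2)"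
      by (simp add: mult.assoc)
    also have "\<dots> \<le> Cp p * (\<bar>a\<bar> powr (p-2) * b^2)" using C1 nn by (intro mult_right_mono) auto
    also have "\<dots> \<le> Cp p * (\<bar>a\<bar> powr (p-2) * b^2 + \<bar>b\<bar> powr p)" using Cnn nn
      by (intro mult_left_mono) auto
    finally have "p*p*2 powr p * \<bar>a\<bar> powr (p-2) * b^2 \<le> Cp p * (\<bar>a\<bar> powr (p-2) * b^2 + \<bar>b\<bar> powr p)" .
    then show ?thesis using key True by linarith
  next
    case False
    then have ab: "\<bar>a\<bar> \<le> 2*\<bar>b\<bar>" by auto
    have "\<bar>a+b\<bar> powr p \<le> (3*\<bar>b\<bar>) powr p" using ab p by (intro powr_mono2) auto
    also have "\<dots> = 3 powr p * \<bar>b\<bar> powr p" by (simp add: powr_mult)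
    finally have L: "\<bar>a+b\<bar> powr p \<le> 3 powr p * \<bar>b\<bar> powr p" .
    have "- (p * \<bar>a\<bar> powr (p-2) * a * b) \<le> p * (\<bar>a\<bar> powr (p-2) * \<bar>a\<bar> * \<bar>b\<bar>)"
    proof -
      have "- (\<bar>a\<bar> powr (p-2) * a * b) \<le> \<bar>a\<bar> powr (p-2) * \<bar>a\<bar> * \<bar>b\<bar>"
      proof -
        have "\<bar>\<bar>a\<bar> powr (p-2) * a * b\<bar> = \<bar>a\<bar> powr (p-2) * \<bar>a\<bar> * \<bar>b\<bar>" by (simp add: abs_mult)
        then show ?thesis by linarith
      qed
      then have "p * (- (\<bar>a\<bar> powr (p-2) * a * b)) \<le> p * (\<bar>a\<bar> powr (p-2) * \<bar>a\<bar> * \<bar>b\<bar>)"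
        using p by (intro mult_left_mono) auto
      then show ?thesis by (simp add: mult.assoc)
    qed
    also have "\<bar>a\<bar> powr (p-2) * \<bar>a\<bar> = \<bar>a\<bar> powr (p-1)"
      by (metis abs_ge_zero powr_pm1 diff_diff_eq one_add_one)
    finally have s1: "- (p * \<bar>a\<bar> powr (p-2) * a * b) \<le> p * (\<bar>a\<bar> powr (p-1) * \<bar>b\<bar>)" .
    have "\<bar>a\<bar> powr (p-1) \<le> (2*\<bar>b\<bar>) powr (p-1)" using ab p by (intro powr_mono2) auto
    then have "\<bar>a\<bar> powr (p-1) * \<bar>b\<bar> \<le> (2*\<bar>b\<bar>) powr (p-1) * \<bar>b\<bar>" by (intro mult_right_mono) auto
    also have "(2*\<bar>b\<bar>) powr (p-1) * \<bar>b\<bar> = 2 powr (p-1) * \<bar>b\<bar> powr p"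
      by (simp add: powr_mult powr_pm1 mult.assoc)
    also have "\<dots> \<le> 2 powr p * \<bar>b\<bar> powr p" by (intro mult_right_mono powr_mono) auto
    finally have "p * (\<bar>a\<bar> powr (p-1) * \<bar>b\<bar>) \<le> p * (2 powr p * \<bar>b\<bar> powr p)"
      using p by (intro mult_left_mono) auto
    then have "- (p * \<bar>a\<bar> powr (p-2) * a * b) \<le> p * (2 powr p * \<bar>b\<bar> powr p)"
      using s1 by linarith
    then have "\<bar>a+b\<bar> powr p \<le> \<bar>a\<bar> powr p + p * \<bar>a\<bar> powr (p-2) * a * b + (3 powr p + p * 2 powr p) * \<bar>b\<bar> powr p"
    proof -
      have e: "(3 powr p + p * 2 powr p) * \<bar>b\<bar> powr p = 3 powr p * \<bar>b\<bar> powr p + p * (2 powr p * \<bar>b\<bar> powr p)"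
        by (simp add: algebra_simps)
      show ?thesis using L e \<open>- (p * \<bar>a\<bar> powr (p-2) * a * b) \<le> p * (2 powr p * \<bar>b\<bar> powr p)\<close>
        powr_ge_zero[of "\<bar>a\<bar>" p] by linarith
    qed
    also have "(3 powr p + p * 2 powr p) * \<bar>b\<bar> powr p \<le> Cp p * (\<bar>a\<bar> powr (p-2) * b^2 + \<bar>b\<bar> powr p)"
    proof -
      have "(3 powr p + p * 2 powr p) * \<bar>b\<bar> powr p \<le> Cp p * \<bar>b\<bar> powr p"
        using C2 by (intro mult_right_mono) auto
      also have "\<dots> \<le> Cp p * (\<bar>a\<bar> powr (p-2) * b^2 + \<bar>b\<bar> powr p)"
        using Cnn nn by (intro mult_left_mono) auto
      finally show ?thesis .
    qed
    finally show ?thesis by simp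
  qed
qed

lemma div_le_self_real:
  fixes x P :: real assumes "x \<ge> 0" "P \<ge> 1" shows "x / P \<le> x"
proof -
  have "x * 1 \<le> x * P" using assms by (intro mult_left_mono) auto
  then show ?thesis using assms by (simp add: pos_divide_le_eq)
qed

lemma young_pw:
  fixes u s n p :: real
  assumes p: "p > 2" and u: "u \<ge> 0" and s: "s \<ge> 0" and n: "n > 0"
  shows "u powr (p-2) * s \<le> u powr p / n + n powr (p/2-1) * s powr (p/2)"
proof -
  define P where "P = p/(p-2)"
  define Q where "Q = p/2"
  define a where "a = u powr (p-2) * n powr (-(p-2)/p)"
  define b where "b = s * n powr ((p-2)/p)"
  have P1: "P > 1" using p by (simp add: P_def field_simps)
  have Q1: "Q > 1" using p by (simp add: Q_def)
  have PQ: "1/P + 1/Q = 1" using p by (simp add: P_def Q_def field_simps)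
  have ab: "a * b = u powr (p-2) * s"
  proof -
    have "a * b = u powr (p-2) * s * (n powr (-(p-2)/p) * n powr ((p-2)/p))"
      by (simp add: a_def b_def algebra_simps)
    also have "n powr (-(p-2)/p) * n powr ((p-2)/p) = 1"
      using n p by (simp add: powr_add[symmetric] add_divide_distrib[symmetric])
    finally show ?thesis by simp
  qed
  have "a * b \<le> a powr P / P + b powr Q / Q"
    using Youngs_inequality[OF P1 Q1 PQ] u s n by (simp add: a_def b_def)
  also have "a powr P = u powr p / n"
  proof -
    have "a powr P = (u powr (p-2)) powr P * (n powr (-(p-2)/p)) powr P"
      unfolding a_def using u n by (simp add: powr_mult)
    also have "\<dots> = u powr p * n powr (-1)"
    proof -
      have e: "(2 - p) / (p - 2) = -1" "(p-2) * (p / (p-2)) = p" using p by (simp_all add: field_simps)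
      show ?thesis using p by (simp add: powr_powr P_def e)
    qed
    finally show ?thesis using n by (simp add: powr_minus divide_inverse)
  qed
  also have "b powr Q = n powr (p/2-1) * s powr (p/2)"
  proof -
    have "b powr Q = s powr Q * (n powr ((p-2)/p)) powr Q"
      unfolding b_def using s n by (simp add: powr_mult)
    also have "\<dots> = s powr (p/2) * n powr (p/2-1)"
    proof -
      have e: "(p - 2) / p * (p / 2) = p/2 - 1" using p by (simp add: field_simps)
      have "(n powr ((p-2)/p)) powr Q = n powr (p/2-1)" unfolding powr_powr Q_def e ..
      then show ?thesis by (simp add: Q_def)
    qed
    finally show ?thesis by simp
  qed
  also have "u powr p / n / P + n powr (p/2-1) * s powr (p/2) / Q \<le> u powr p / n + n powr (p/2-1) * s powr (p/2)"
  proof -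
    have "0 \<le> u powr p / n" using n by simp
    then have "u powr p / n / P \<le> u powr p / n"
      using P1 by (intro div_le_self_real) auto
    moreover have "n powr (p/2-1) * s powr (p/2) / Q \<le> n powr (p/2-1) * s powr (p/2)"
      using Q1 by (intro div_le_self_real) auto
    ultimately show ?thesis by linarith
  qed
  finally show ?thesis using ab by simp
qed

lemma (in finite_measure) integrable_bnd:
  fixes f :: "_ \<Rightarrow> real"
  assumes "f \<in> borel_measurable M" "\<And>x. x \<in> space M \<Longrightarrow> \<bar>f x\<bar> \<le> B"
  shows "integrable M f"
  using assms by (intro integrable_const_bound[where B=B]) auto

lemma (in prob_space) moment_bound:
  fixes Y :: "nat \<Rightarrow> 'a \<Rightarrow> real" and p B s2 mu :: real and n :: nat
  assumes p: "p > 2" and n: "n > 0"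
    and meas: "\<And>i. i < n \<Longrightarrow> Y i \<in> borel_measurable M"
    and bnd: "\<And>i \<omega>. i < n \<Longrightarrow> \<omega> \<in> space M \<Longrightarrow> \<bar>Y i \<omega>\<bar> \<le> B"
    and ind: "\<And>j. j < n \<Longrightarrow> indep_var borel (\<lambda>\<omega>. \<Sum>i<j. Y i \<omega>) borel (Y j)"
    and mean: "\<And>i. i < n \<Longrightarrow> expectation (Y i) = 0"
    and var: "\<And>i. i < n \<Longrightarrow> expectation (\<lambda>\<omega>. (Y i \<omega>)^2) \<le> s2"
    and mom: "\<And>i. i < n \<Longrightarrow> expectation (\<lambda>\<omega>. \<bar>Y i \<omega>\<bar> powr p) \<le> mu"
  shows "expectation (\<lambda>\<omega>. \<bar>\<Sum>i<n. Y i \<omega>\<bar> powr p)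
           \<le> Cp p * exp (Cp p) * (real n powr (p/2) * s2 powr (p/2) + real n * mu)"
proof -
  have p0: "0 \<le> p" and p2: "0 \<le> p - 2" and p2': "2 \<le> p" using p by auto
  define S where "S = (\<lambda>j \<omega>. \<Sum>i<j. Y i \<omega>)"
  define A where "A j = expectation (\<lambda>\<omega>. \<bar>S j \<omega>\<bar> powr p)" for j
  define c where "c = Cp p"
  define D where "D = c * (real n powr (p/2-1) * s2 powr (p/2) + mu)"
  have c0: "c \<ge> 0" unfolding c_def Cp_def using p by (intro add_nonneg_nonneg mult_nonneg_nonneg) auto
  have s20: "s2 \<ge> 0" using var[OF n] by (smt (verit) integral_nonneg_AE zero_le_power2 AE_I2)
  have mu0: "mu \<ge> 0" using mom[OF n] by (smt (verit) integral_nonneg_AE powr_ge_zero AE_I2)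
  have D0: "D \<ge> 0" unfolding D_def using c0 s20 mu0 by auto
  have SM: "S j \<in> borel_measurable M" if "j \<le> n" for j
    unfolding S_def using that meas by (intro borel_measurable_sum) auto
  have Sb: "\<bar>S j \<omega>\<bar> \<le> real j * B" if "j \<le> n" "\<omega> \<in> space M" for j \<omega>
  proof -
    have "\<bar>S j \<omega>\<bar> \<le> (\<Sum>i<j. \<bar>Y i \<omega>\<bar>)" unfolding S_def by (rule sum_abs)
    also have "\<dots> \<le> (\<Sum>i<j. B)" using that bnd by (intro sum_mono) auto
    finally show ?thesis by simp
  qed
  have step: "A (Suc j) \<le> (1 + c / n) * A j + D" if j: "j < n" for j
  proof -
    have jn: "j \<le> n" using j by simp
    note SMj[measurable] = SM[OF jn]
    note YM[measurable] = meas[OF j]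
    define g1 where "g1 x = \<bar>x\<bar> powr (p-2) * x" for x :: real
    define g2 where "g2 x = \<bar>x\<bar> powr (p-2)" for x :: real
    have g1m[measurable]: "g1 \<in> borel_measurable borel" unfolding g1_def by measurable
    have g2m[measurable]: "g2 \<in> borel_measurable borel" unfolding g2_def by measurable
    have indS: "indep_var borel (S j) borel (Y j)" using ind[OF j] by (simp add: S_def)
    have I1: "indep_var borel (g1 \<circ> S j) borel ((\<lambda>y. y) \<circ> Y j)"
      by (rule indep_var_compose[OF indS]) auto
    have I2: "indep_var borel (g2 \<circ> S j) borel ((\<lambda>y. y^2) \<circ> Y j)"
      by (rule indep_var_compose[OF indS]) auto
    define K where "K = real j * B"
    have K0: "0 \<le> K" using Sb[OF jn] bnd[OF j] n
      by (metis K_def abs_ge_zero order_trans prob_space.not_empty prob_space_axioms all_not_in_conv)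
    have B0: "0 \<le> B" using bnd[OF j] by (metis abs_ge_zero order_trans prob_space.not_empty prob_space_axioms all_not_in_conv)
    have SbK: "\<bar>S j \<omega>\<bar> \<le> K" if "\<omega> \<in> space M" for \<omega> using Sb[OF jn that] by (simp add: K_def)
    have intg1: "integrable M (g1 \<circ> S j)"
      by (rule integrable_bnd[where B="K powr (p-2) * K"]) (auto simp: g1_def abs_mult intro!: mult_mono powr_mono2 SbK K0 simp: p0 p2 p2')
    have intY: "integrable M (Y j)" by (rule integrable_bnd[where B=B]) (auto intro: bnd[OF j])
    have intY': "integrable M ((\<lambda>y. y) \<circ> Y j)" using intY by (simp add: comp_def)
    have intg2: "integrable M (g2 \<circ> S j)"
      by (rule integrable_bnd[where B="K powr (p-2)"]) (auto simp: g2_def intro!: powr_mono2 SbK K0 simp: p0 p2 p2')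
    have intY2: "integrable M ((\<lambda>y. y^2) \<circ> Y j)"
      by (rule integrable_bnd[where B="B^2"]) (use B0 bnd[OF j] in \<open>auto simp: abs_le_square_iff[symmetric]\<close>)
    have intSp: "integrable M (\<lambda>\<omega>. \<bar>S j \<omega>\<bar> powr p)"
      by (rule integrable_bnd[where B="K powr p"]) (auto intro!: powr_mono2 SbK simp: p0 p2 p2')
    have intSp': "integrable M (\<lambda>\<omega>. \<bar>S (Suc j) \<omega>\<bar> powr p)"
      by (rule integrable_bnd[where B="(real (Suc j) * B) powr p"])
         (use SM[of "Suc j"] j Sb[of "Suc j"] in \<open>auto intro!: powr_mono2 simp: p0 p2 p2'\<close>)
    have intYp: "integrable M (\<lambda>\<omega>. \<bar>Y j \<omega>\<bar> powr p)"
      by (rule integrable_bnd[where B="B powr p"]) (auto intro!: powr_mono2 bnd[OF j] simp: p0 p2 p2')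
    have E1: "expectation (\<lambda>\<omega>. g1 (S j \<omega>) * Y j \<omega>) = 0"
      using indep_var_lebesgue_integral[OF I1 intg1 intY'] mean[OF j] by (simp add: comp_def)
    have int1: "integrable M (\<lambda>\<omega>. g1 (S j \<omega>) * Y j \<omega>)"
      using indep_var_integrable[OF I1 intg1 intY'] by (simp add: comp_def)
    have E2: "expectation (\<lambda>\<omega>. g2 (S j \<omega>) * (Y j \<omega>)^2) = expectation (\<lambda>\<omega>. g2 (S j \<omega>)) * expectation (\<lambda>\<omega>. (Y j \<omega>)^2)"
      using indep_var_lebesgue_integral[OF I2 intg2 intY2] by (simp add: comp_def)
    have int2: "integrable M (\<lambda>\<omega>. g2 (S j \<omega>) * (Y j \<omega>)^2)"
      using indep_var_integrable[OF I2 intg2 intY2] by (simp add: comp_def)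
    have intg2': "integrable M (\<lambda>\<omega>. g2 (S j \<omega>))" using intg2 by (simp add: comp_def)
    have Eg2: "expectation (\<lambda>\<omega>. g2 (S j \<omega>)) \<ge> 0" by (auto simp: g2_def intro!: integral_nonneg_AE)
    have pw: "\<bar>S (Suc j) \<omega>\<bar> powr p \<le> \<bar>S j \<omega>\<bar> powr p + p * (g1 (S j \<omega>) * Y j \<omega>)
          + c * (g2 (S j \<omega>) * (Y j \<omega>)^2 + \<bar>Y j \<omega>\<bar> powr p)" for \<omega>
      using pw_ineq[of p "S j \<omega>" "Y j \<omega>"] p unfolding S_def g1_def g2_def c_def
      by (simp add: mult.assoc)
    have "A (Suc j) \<le> expectation (\<lambda>\<omega>. \<bar>S j \<omega>\<bar> powr p + p * (g1 (S j \<omega>) * Y j \<omega>)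
          + c * (g2 (S j \<omega>) * (Y j \<omega>)^2 + \<bar>Y j \<omega>\<bar> powr p))"
      unfolding A_def using intSp' intSp int1 int2 intYp pw by (intro integral_mono) auto
    also have "\<dots> = A j + p * 0 + c * (expectation (\<lambda>\<omega>. g2 (S j \<omega>)) * expectation (\<lambda>\<omega>. (Y j \<omega>)^2)
          + expectation (\<lambda>\<omega>. \<bar>Y j \<omega>\<bar> powr p))"
      unfolding A_def using intSp int1 int2 intYp E1 E2 by simp
    also have "\<dots> \<le> A j + c * (expectation (\<lambda>\<omega>. g2 (S j \<omega>)) * s2 + mu)"
      using var[OF j] mom[OF j] Eg2 c0 by (simp add: add_mono mult_left_mono)
    finally have X: "A (Suc j) \<le> A j + c * (expectation (\<lambda>\<omega>. g2 (S j \<omega>)) * s2 + mu)" .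
    have "expectation (\<lambda>\<omega>. g2 (S j \<omega>)) * s2 = expectation (\<lambda>\<omega>. g2 (S j \<omega>) * s2)"
      by simp
    also have "\<dots> \<le> expectation (\<lambda>\<omega>. \<bar>S j \<omega>\<bar> powr p / n + real n powr (p/2-1) * s2 powr (p/2))"
      using intg2' intSp p s20 n unfolding g2_def by (intro integral_mono young_pw) auto
    also have "\<dots> = A j / n + real n powr (p/2-1) * s2 powr (p/2)"
      unfolding A_def using intSp by (simp add: prob_space)
    finally have "c * (expectation (\<lambda>\<omega>. g2 (S j \<omega>)) * s2 + mu) \<le> c * (A j / n + real n powr (p/2-1) * s2 powr (p/2) + mu)"
      using c0 by (intro mult_left_mono) auto
    then show ?thesis using X unfolding D_def by (simp add: algebra_simps)
  qed
  have ind_bound: "A j \<le> (1 + c/n)^j * real j * D" if "j \<le> n" for j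
    using that
  proof (induction j)
    case 0
    then show ?case by (simp add: A_def S_def)
  next
    case (Suc j)
    have q0: "1 \<le> 1 + c/n" using c0 n by simp
    have "A (Suc j) \<le> (1 + c/n) * A j + D" using step Suc.prems by simp
    also have "\<dots> \<le> (1 + c/n) * ((1 + c/n)^j * real j * D) + D"
      using Suc q0 by (intro add_mono mult_left_mono) auto
    finally have a1: "A (Suc j) \<le> (1 + c/n) * ((1 + c/n)^j * real j * D) + D" .
    have a2: "D \<le> (1 + c/n)^(Suc j) * D" using D0 q0 one_le_power[OF q0, of "Suc j"]
      by (simp add: mult_le_cancel_right1 del: power_Suc)
    have e1: "(1 + c/n) * ((1 + c/n)^j * real j * D) = (1 + c/n)^(Suc j) * real j * D" by simp
    have e2: "(1 + c/n)^(Suc j) * real (Suc j) * D = (1 + c/n)^(Suc j) * real j * D + (1 + c/n)^(Suc j) * D"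
      by (simp add: algebra_simps del: power_Suc)
    show ?case using a1 a2 e1 e2 by linarith
  qed
  have f1: "A n \<le> (1 + c/n)^n * (real n * D)" using ind_bound[of n] by (simp add: mult.assoc)
  have f2: "(1 + c/n)^n \<le> exp c"
  proof -
    have "(1 + c/n)^n \<le> exp (c/n) ^ n" using c0 n by (intro power_mono) auto
    also have "\<dots> = exp c" using n by (simp add: exp_of_nat_mult[symmetric])
    finally show ?thesis .
  qed
  have f3: "real n * D = c * (real n powr (p/2) * s2 powr (p/2) + real n * mu)"
  proof -
    have "real n * real n powr (p/2-1) = real n powr (p/2)" using powr_pm1[of "real n" "p/2"] by (simp add: mult.commute)
    then show ?thesis unfolding D_def by (simp add: algebra_simps)
  qed
  have "A n \<le> exp c * (real n * D)" using f1 f2 D0 by (meson mult_right_mono of_nat_0_le_iff order_trans zero_le_mult_iff)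
  then show ?thesis unfolding f3 A_def S_def c_def by (simp add: mult_ac)
qed



lemma tangent_neg_powr:
  fixes a k q :: real
  assumes a: "0 < a" and ak: "a < k" and q: "q > 0"
  shows "k powr (-q) + q * k powr (-q-1) * (k - a) \<le> a powr (-q)"
proof -
  define h where "h = (k - a) / k"
  have k: "k > 0" using a ak by simp
  have h0: "0 < h" "h < 1" using a ak k by (auto simp: h_def field_simps)
  have aeq: "a = k * (1 - h)" using k by (simp add: h_def field_simps)
  have "1 + q * h \<le> 1 + (- q * ln (1 - h))"
  proof -
    have "ln (1 - h) \<le> (1 - h) - 1" using h0 by (intro ln_le_minus_one) auto
    then have "q * ln (1 - h) \<le> q * (- h)" using q by (intro mult_left_mono) auto
    then have "q * h \<le> - q * ln (1 - h)" by simp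
    then show ?thesis by simp
  qed
  also have "\<dots> \<le> exp (- q * ln (1 - h))" by (rule exp_ge_add_one_self)
  also have "\<dots> = (1 - h) powr (-q)" using h0 by (simp add: powr_def)
  finally have b: "1 + q * h \<le> (1 - h) powr (-q)" .
  have "a powr (-q) = k powr (-q) * (1 - h) powr (-q)" using aeq k h0 by (simp add: powr_mult)
  also have "\<dots> \<ge> k powr (-q) * (1 + q * h)" using b by (intro mult_left_mono) auto
  finally have c: "k powr (-q) * (1 + q * h) \<le> a powr (-q)" .
  have "k powr (-q-1) = k powr (-q) / k" using k by (simp add: powr_diff)
  then have "k powr (-q) * (1 + q * h) = k powr (-q) + q * k powr (-q-1) * (k - a)"
    using k by (simp add: h_def field_simps)
  then show ?thesis using c by simp
qed

lemma tail_bound: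
  fixes x p :: real assumes p: "p > 2"
  shows "(\<Sum>n. ennreal (real (Suc n) powr (1-p) * \<bar>trunc_at (Suc n) x\<bar> powr p))
     \<le> ennreal (4/(3*(p-2)) * 4 powr (p-2) * (1 + x^2))"
proof -
  define q where "q = p - 2"
  have q: "q > 0" using p by (simp add: q_def)
  define y where "y = max \<bar>x\<bar> 1"
  have y1: "y \<ge> 1" by (simp add: y_def)
  define \<psi> where "\<psi> j = (max (real j) (y/4)) powr (-q)" for j :: nat
  define c where "c = 4/(3*q)"
  have c0: "c > 0" using q by (simp add: c_def)
  have \<psi>mono: "\<psi> (Suc n) \<le> \<psi> n" for n
    unfolding \<psi>_def using q y1 by (intro powr_mono2') auto
  have trm: "real (Suc n) powr (1-p) * \<bar>trunc_at (Suc n) x\<bar> powr p \<le> c * y powr p * (\<psi> n - \<psi> (Suc n))" for n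
  proof (cases "\<bar>x\<bar> \<le> real (Suc n)")
    case False
    then have "trunc_at (Suc n) x = 0" by (simp add: trunc_at_def)
    then show ?thesis using \<psi>mono[of n] c0 by simp
  next
    case True
    define k where "k = real (Suc n)"
    define a where "a = max (real n) (y/4)"
    have yk: "y \<le> k" using True by (simp add: y_def k_def)
    have a0: "0 < a" using y1 by (simp add: a_def)
    have ak: "a < k" using yk y1 by (simp add: a_def k_def)
    have ka: "k - a \<ge> 3/4"
    proof (cases "n = 0")
      case True then show ?thesis using yk by (simp add: a_def k_def y_def)
    next
      case False
      then have "real n \<ge> 1" by simp
      then have "y/4 \<le> real n" using yk by (simp add: k_def)
      then show ?thesis by (simp add: a_def k_def)
    qed
    have psk: "\<psi> (Suc n) = k powr (-q)" using yk y1 by (simp add: \<psi>_def k_def)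
    have psn: "\<psi> n = a powr (-q)" by (simp add: \<psi>_def a_def)
    have tg: "k powr (-q) + q * k powr (-q-1) * (k - a) \<le> a powr (-q)"
      by (rule tangent_neg_powr[OF a0 ak q])
    have e1: "1 - p = -q-1" by (simp add: q_def)
    have "q * k powr (-q-1) * (3/4) \<le> q * k powr (-q-1) * (k - a)"
      using ka q by (intro mult_left_mono) auto
    then have "k powr (1-p) \<le> c * (\<psi> n - \<psi> (Suc n))"
      using tg q unfolding psk psn c_def e1 by (simp add: field_simps)
    moreover have "\<bar>trunc_at (Suc n) x\<bar> powr p \<le> y powr p"
      using True p by (auto simp: trunc_at_def y_def intro!: powr_mono2)
    moreover have "0 \<le> c * (\<psi> n - \<psi> (Suc n))" using c0 \<psi>mono[of n] by simp
    ultimately have "k powr (1-p) * \<bar>trunc_at (Suc n) x\<bar> powr p \<le> c * (\<psi> n - \<psi> (Suc n)) * y powr p"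
      by (intro mult_mono) auto
    then show ?thesis by (simp add: k_def mult_ac)
  qed
  have lim: "\<psi> \<longlonglongrightarrow> 0"
  proof -
    have "filterlim (\<lambda>j::nat. max (real j) (y/4)) at_top sequentially"
      by (rule filterlim_at_top_mono[OF filterlim_real_sequentially]) auto
    then show ?thesis unfolding \<psi>_def using q by (intro tendsto_neg_powr) auto
  qed
  have sm: "(\<lambda>n. c * y powr p * (\<psi> n - \<psi> (Suc n))) sums (c * y powr p * (\<psi> 0 - 0))"
    by (intro sums_mult telescope_sums' lim)
  have "(\<Sum>n. ennreal (real (Suc n) powr (1-p) * \<bar>trunc_at (Suc n) x\<bar> powr p))
      \<le> (\<Sum>n. ennreal (c * y powr p * (\<psi> n - \<psi> (Suc n))))"
    by (intro suminf_le summableI ennreal_leI trm)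
  also have "\<dots> = ennreal (c * y powr p * (\<psi> 0 - 0))"
    using \<psi>mono c0 by (intro suminf_ennreal_eq sm) auto
  also have "c * y powr p * (\<psi> 0 - 0) = c * 4 powr q * y^2"
  proof -
    have "\<psi> 0 = (y/4) powr (-q)" using y1 by (simp add: \<psi>_def)
    also have "\<dots> = y powr (-q) / 4 powr (-q)" by (rule powr_divide)
    also have "\<dots> = 4 powr q * y powr (-q)" unfolding powr_minus[of 4 q] by (simp only: divide_inverse inverse_inverse_eq mult.commute)
    finally have "y powr p * \<psi> 0 = 4 powr q * (y powr p * y powr (-q))" by simp
    also have "y powr p * y powr (-q) = y^2"
      using y1 by (simp add: powr_add[symmetric] q_def)
    finally show ?thesis by simp
  qed
  also have "ennreal (c * 4 powr q * y^2) \<le> ennreal (c * 4 powr q * (1 + x^2))"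
  proof -
    have "y^2 \<le> 1 + x^2" unfolding y_def by (cases "\<bar>x\<bar> \<le> 1") (auto simp: max_def abs_le_square_iff[symmetric] power2_abs)
    then show ?thesis using c0 by (intro ennreal_leI mult_left_mono) auto
  qed
  finally show ?thesis by (simp add: c_def q_def)
qed



lemma indep_part:
  fixes Xa :: "nat \<Rightarrow> nat \<Rightarrow> 'a \<Rightarrow> real" and g :: "real \<Rightarrow> real"
  assumes "prob_space M"
  and ind: "prob_space.indep_vars M (\<lambda>_. borel) (\<lambda>(i, k). Xa i k) {(i, k). 1 \<le> i \<and> i \<le> k}"
  and g: "g \<in> borel_measurable borel"
  and jk: "j < k"
  shows "prob_space.indep_var M borel (\<lambda>\<omega>. \<Sum>i<j. g (Xa (Suc i) k \<omega>)) borel (\<lambda>\<omega>. g (Xa (Suc j) k \<omega>))"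
proof -
  interpret prob_space M by fact
  define A where "A = (\<lambda>i. (Suc i, k)) ` {..<j}"
  define B where "B = {(Suc j, k)}"
  define Z where "Z = (\<lambda>(i, k). Xa i k)"
  have I: "indep_var (PiM A (\<lambda>_. borel)) (\<lambda>\<omega>. restrict (\<lambda>ik. Z ik \<omega>) A)
      (PiM B (\<lambda>_. borel)) (\<lambda>\<omega>. restrict (\<lambda>ik. Z ik \<omega>) B)"
    by (rule indep_var_restrict[OF ind[folded Z_def]]) (use jk in \<open>auto simp: A_def B_def\<close>)
  have m1: "(\<lambda>f. \<Sum>i<j. g (f (Suc i, k))) \<in> borel_measurable (PiM A (\<lambda>_. borel))"
  proof (intro borel_measurable_sum)
    fix i assume "i \<in> {..<j}"
    then have "(Suc i, k) \<in> A" by (auto simp: A_def)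
    then show "(\<lambda>f. g (f (Suc i, k))) \<in> borel_measurable (PiM A (\<lambda>_. borel))"
      by (rule measurable_compose[OF measurable_component_singleton[of "(Suc i, k)" A "\<lambda>_. borel"] g])
  qed
  have m2: "(\<lambda>f. g (f (Suc j, k))) \<in> borel_measurable (PiM B (\<lambda>_. borel))"
    by (rule measurable_compose[OF measurable_component_singleton[of "(Suc j, k)" B "\<lambda>_. borel"] g]) (auto simp: B_def)
  have e1: "(\<lambda>f. \<Sum>i<j. g (f (Suc i, k))) \<circ> (\<lambda>\<omega>. restrict (\<lambda>ik. Z ik \<omega>) A) = (\<lambda>\<omega>. \<Sum>i<j. g (Xa (Suc i) k \<omega>))"
    by (auto simp: A_def Z_def intro!: sum.cong)
  have e2: "(\<lambda>f. g (f (Suc j, k))) \<circ> (\<lambda>\<omega>. restrict (\<lambda>ik. Z ik \<omega>) B) = (\<lambda>\<omega>. g (Xa (Suc j) k \<omega>))"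
    by (auto simp: B_def Z_def)
  show ?thesis using indep_var_compose[OF I m1 m2] unfolding e1 e2 .
qed

lemma per_k:
  fixes M :: "'a measure" and N :: "'b measure"
    and X :: "'b \<Rightarrow> real" and Xa :: "nat \<Rightarrow> nat \<Rightarrow> 'a \<Rightarrow> real" and p :: real and k :: nat
  assumes "prob_space M" and "prob_space N"
    and Xm: "X \<in> borel_measurable N"
    and X2: "integrable N (\<lambda>x. (X x)\<^sup>2)"
    and ind: "prob_space.indep_vars M (\<lambda>_. borel) (\<lambda>(i, k). Xa i k) {(i, k). 1 \<le> i \<and> i \<le> k}"
    and dist: "\<And>i k. 1 \<le> i \<Longrightarrow> i \<le> k \<Longrightarrow> distr M borel (Xa i k) = distr N borel X"
    and p: "p > 2" and k: "k > 0"
  shows "(\<integral>\<^sup>+ \<omega>. ennreal ((\<bar>centered_trunc_sum M Xa k \<omega>\<bar> / real k) powr p) \<partial>M)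
     \<le> ennreal (Cp p * exp (Cp p) * (real k powr (-(p/2)) * (\<integral>x. (X x)\<^sup>2 \<partial>N) powr (p/2)
         + real k powr (1-p) * (2 powr p * ((\<integral>x. \<bar>trunc_at k (X x)\<bar> powr p \<partial>N) + (\<integral>x. (X x)\<^sup>2 \<partial>N) powr (p/2)))))"
proof -
  interpret M: prob_space M by fact
  interpret N: prob_space N by fact
  have p0: "0 \<le> p" using p by simp
  have Xam[measurable]: "Xa i k \<in> borel_measurable M" if "1 \<le> i" "i \<le> k" for i
    using ind that unfolding M.indep_vars_def by auto
  define t where "t = trunc_at k"
  have tm[measurable]: "t \<in> borel_measurable borel" unfolding t_def trunc_at_def[abs_def] by measurable
  have tb: "\<bar>t x\<bar> \<le> real k" for x by (simp add: t_def trunc_at_def)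
  have tX: "\<bar>t x\<bar> \<le> \<bar>x\<bar>" for x by (simp add: t_def trunc_at_def)
  define s2 where "s2 = (\<integral>x. (X x)\<^sup>2 \<partial>N)"
  define m where "m = (\<integral>x. t (X x) \<partial>N)"
  have tr: "(\<integral>\<omega>. f (Xa i k \<omega>) \<partial>M) = (\<integral>x. f (X x) \<partial>N)"
    if f: "f \<in> borel_measurable borel" and i: "1 \<le> i" "i \<le> k" for f :: "real \<Rightarrow> real" and i
  proof -
    have "(\<integral>\<omega>. f (Xa i k \<omega>) \<partial>M) = integral\<^sup>L (distr M borel (Xa i k)) f"
      using i f by (simp add: integral_distr)
    also have "\<dots> = integral\<^sup>L (distr N borel X) f" using dist[OF i] by simp
    also have "\<dots> = (\<integral>x. f (X x) \<partial>N)" using f Xm by (simp add: integral_distr)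
    finally show ?thesis .
  qed
  define Y where "Y = (\<lambda>i \<omega>. t (Xa (Suc i) k \<omega>) - m)"
  have Teq: "centered_trunc_sum M Xa k \<omega> = (\<Sum>i<k. Y i \<omega>)" for \<omega>
  proof -
    have "centered_trunc_sum M Xa k \<omega> = (\<Sum>i\<in>{Suc 0..k}. t (Xa i k \<omega>) - m)"
      unfolding centered_trunc_sum_def
      by (intro sum.cong refl) (auto simp: m_def t_def[symmetric] tr[OF tm])
    also have "\<dots> = (\<Sum>i<k. Y i \<omega>)" unfolding sum.atLeast1_atMost_eq Y_def ..
    finally show ?thesis .
  qed
  have inttN: "integrable N (\<lambda>x. f (t (X x)))" if "f \<in> borel_measurable borel" "\<And>y. \<bar>y\<bar> \<le> real k \<Longrightarrow> \<bar>f y\<bar> \<le> C"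
    for f :: "real \<Rightarrow> real" and C :: real
  proof (rule N.integrable_bnd[where B=C])
    show "(\<lambda>x. f (t (X x))) \<in> borel_measurable N"
      by (rule measurable_compose[OF measurable_compose[OF Xm tm] that(1)])
  qed (use that tb in auto)
  have it: "integrable N (\<lambda>x. t (X x))" by (rule inttN[of _ "real k"]) auto
  have it2: "integrable N (\<lambda>x. (t (X x))^2)"
    by (rule inttN[of _ "real k ^ 2"]) (auto simp: abs_le_square_iff[symmetric])
  have itp: "integrable N (\<lambda>x. \<bar>t (X x)\<bar> powr p)"
    by (rule inttN[of _ "real k powr p"]) (auto intro!: powr_mono2 simp: p0)
  have itpm: "integrable N (\<lambda>x. \<bar>t (X x) - m\<bar> powr p)"
    by (rule inttN[of _ "(real k + \<bar>m\<bar>) powr p"]) (auto intro!: powr_mono2 simp: p0)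
  have Et2: "(\<integral>x. (t (X x))^2 \<partial>N) \<le> s2"
    unfolding s2_def using it2 X2
  proof (intro integral_mono)
    fix x show "(t (X x))^2 \<le> (X x)^2" using tX[of "X x"] by (simp add: abs_le_square_iff[symmetric])
  qed
  have var_eq: "(\<integral>x. (t (X x) - m)^2 \<partial>N) = (\<integral>x. (t (X x))^2 \<partial>N) - m^2"
  proof -
    have "(\<lambda>x. (t (X x) - m)^2) = (\<lambda>x. (t (X x))^2 - 2 * m * t (X x) + m^2)"
      by (auto simp: power2_eq_square algebra_simps)
    then have "(\<integral>x. (t (X x) - m)^2 \<partial>N) = (\<integral>x. (t (X x))^2 - 2 * m * t (X x) + m^2 \<partial>N)" by simp
    also have "\<dots> = (\<integral>x. (t (X x))^2 \<partial>N) - 2 * m * m + m^2"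
      using it it2 by (simp add: m_def N.prob_space)
    finally show ?thesis by (simp add: power2_eq_square)
  qed
  have m2: "m^2 \<le> (\<integral>x. (t (X x))^2 \<partial>N)"
  proof -
    have "0 \<le> (\<integral>x. (t (X x) - m)^2 \<partial>N)" by (intro integral_nonneg_AE) auto
    then show ?thesis using var_eq by simp
  qed
  have s20: "0 \<le> s2" unfolding s2_def by (intro integral_nonneg_AE) auto
  have varN: "(\<integral>x. (t (X x) - m)^2 \<partial>N) \<le> s2" using var_eq Et2 by (smt (verit) zero_le_power2)
  have mm: "\<bar>m\<bar> powr p \<le> s2 powr (p/2)"
  proof -
    have "\<bar>m\<bar> powr p = (\<bar>m\<bar> powr 2) powr (p/2)" unfolding powr_powr by simp
    also have "\<bar>m\<bar> powr 2 = m^2" by simp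
    also have "(m^2) powr (p/2) \<le> s2 powr (p/2)" using m2 Et2 p by (intro powr_mono2) auto
    finally show ?thesis .
  qed
  have pwd: "\<bar>a - b\<bar> powr p \<le> 2 powr p * (\<bar>a\<bar> powr p + \<bar>b\<bar> powr p)" for a b :: real
  proof -
    have "\<bar>a - b\<bar> powr p \<le> (2 * max \<bar>a\<bar> \<bar>b\<bar>) powr p" using p by (intro powr_mono2) auto
    also have "\<dots> = 2 powr p * max \<bar>a\<bar> \<bar>b\<bar> powr p" by (simp add: powr_mult)
    also have "max \<bar>a\<bar> \<bar>b\<bar> powr p \<le> \<bar>a\<bar> powr p + \<bar>b\<bar> powr p" by (simp add: max_def)
    finally show ?thesis by simp
  qed
  have momN: "(\<integral>x. \<bar>t (X x) - m\<bar> powr p \<partial>N) \<le> 2 powr p * ((\<integral>x. \<bar>t (X x)\<bar> powr p \<partial>N) + s2 powr (p/2))"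
  proof -
    have "(\<integral>x. \<bar>t (X x) - m\<bar> powr p \<partial>N) \<le> (\<integral>x. 2 powr p * (\<bar>t (X x)\<bar> powr p + \<bar>m\<bar> powr p) \<partial>N)"
      using itpm itp by (intro integral_mono pwd) auto
    also have "\<dots> = 2 powr p * ((\<integral>x. \<bar>t (X x)\<bar> powr p \<partial>N) + \<bar>m\<bar> powr p)"
      using itp by (simp add: N.prob_space)
    also have "\<dots> \<le> 2 powr p * ((\<integral>x. \<bar>t (X x)\<bar> powr p \<partial>N) + s2 powr (p/2))"
      using mm by (intro mult_left_mono) auto
    finally show ?thesis .
  qed
  define mu where "mu = 2 powr p * ((\<integral>x. \<bar>t (X x)\<bar> powr p \<partial>N) + s2 powr (p/2))"
  have Ym: "Y i \<in> borel_measurable M" if "i < k" for i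
    unfolding Y_def using that by (intro borel_measurable_diff measurable_compose[OF Xam tm]) auto
  have Ybnd: "\<bar>Y i \<omega>\<bar> \<le> real k + \<bar>m\<bar>" for i \<omega>
    unfolding Y_def using tb[of "Xa (Suc i) k \<omega>"] by linarith
  have trY: "(\<integral>\<omega>. f (Y i \<omega>) \<partial>M) = (\<integral>x. f (t (X x) - m) \<partial>N)"
    if f: "f \<in> borel_measurable borel" and i: "i < k" for f :: "real \<Rightarrow> real" and i
  proof -
    have "(\<lambda>x. f (t x - m)) \<in> borel_measurable borel" using f by measurable
    then show ?thesis unfolding Y_def using tr[of "\<lambda>x. f (t x - m)" "Suc i"] i by simp
  qed
  have MB: "M.expectation (\<lambda>\<omega>. \<bar>\<Sum>i<k. Y i \<omega>\<bar> powr p)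
           \<le> Cp p * exp (Cp p) * (real k powr (p/2) * s2 powr (p/2) + real k * mu)"
  proof (rule M.moment_bound[OF p k Ym Ybnd])
    fix j assume j: "j < k"
    show "M.indep_var borel (\<lambda>\<omega>. \<Sum>i<j. Y i \<omega>) borel (Y j)"
      using indep_part[OF \<open>prob_space M\<close> ind _ j, of "\<lambda>x. t x - m"] unfolding Y_def by simp
  next
    fix i assume i: "i < k"
    show "M.expectation (Y i) = 0"
      using trY[of "\<lambda>x. x" i] i it by (simp add: m_def N.prob_space)
    show "M.expectation (\<lambda>\<omega>. (Y i \<omega>)^2) \<le> s2"
      using trY[of "\<lambda>x. x^2" i] i varN by simp
    show "M.expectation (\<lambda>\<omega>. \<bar>Y i \<omega>\<bar> powr p) \<le> mu"
      using trY[of "\<lambda>x. \<bar>x\<bar> powr p" i] i momN by (simp add: mu_def)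
  qed
  define T where "T = (\<lambda>\<omega>. \<Sum>i<k. Y i \<omega>)"
  have Tm: "T \<in> borel_measurable M" unfolding T_def using Ym by (intro borel_measurable_sum) auto
  have Tb: "\<bar>T \<omega>\<bar> \<le> real k * (real k + \<bar>m\<bar>)" for \<omega>
  proof -
    have "\<bar>T \<omega>\<bar> \<le> (\<Sum>i<k. \<bar>Y i \<omega>\<bar>)" unfolding T_def by (rule sum_abs)
    also have "\<dots> \<le> (\<Sum>i<k. real k + \<bar>m\<bar>)" using Ybnd by (intro sum_mono) auto
    finally show ?thesis by simp
  qed
  have kpos: "real k > 0" using k by simp
  define K0 where "K0 = Cp p * exp (Cp p)"
  have fe: "(\<bar>T \<omega>\<bar> / real k) powr p = \<bar>T \<omega>\<bar> powr p * real k powr (-p)" for \<omega>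
    unfolding powr_divide powr_minus by (simp add: divide_inverse)
  have intTp: "integrable M (\<lambda>\<omega>. \<bar>T \<omega>\<bar> powr p)"
    by (rule M.integrable_bnd[where B="(real k * (real k + \<bar>m\<bar>)) powr p"])
       (use Tm Tb in \<open>auto intro!: powr_mono2 simp: p0\<close>)
  have intf: "integrable M (\<lambda>\<omega>. (\<bar>T \<omega>\<bar> / real k) powr p)"
    unfolding fe using intTp by simp
  have "(\<integral>\<^sup>+ \<omega>. ennreal ((\<bar>centered_trunc_sum M Xa k \<omega>\<bar> / real k) powr p) \<partial>M)
      = (\<integral>\<^sup>+ \<omega>. ennreal ((\<bar>T \<omega>\<bar> / real k) powr p) \<partial>M)"
    by (simp add: Teq T_def)
  also have "\<dots> = ennreal (\<integral>\<omega>. (\<bar>T \<omega>\<bar> / real k) powr p \<partial>M)"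
    using intf by (intro nn_integral_eq_integral) auto
  also have "(\<integral>\<omega>. (\<bar>T \<omega>\<bar> / real k) powr p \<partial>M) = real k powr (-p) * M.expectation (\<lambda>\<omega>. \<bar>T \<omega>\<bar> powr p)"
    unfolding fe by (simp add: mult.commute)
  also have "\<dots> \<le> real k powr (-p) * (K0 * (real k powr (p/2) * s2 powr (p/2) + real k * mu))"
    using MB unfolding T_def K0_def by (intro mult_left_mono) auto
  also have "\<dots> = K0 * (real k powr (-(p/2)) * s2 powr (p/2) + real k powr (1-p) * mu)"
  proof -
    have a: "real k powr (-p) * real k powr (p/2) = real k powr (-(p/2))" unfolding powr_add[symmetric] by simp
    have b: "real k powr (-p) * real k = real k powr (1-p)"
      using powr_pm1[of "real k" "1-p"] by simp
    have "real k powr (-p) * (K0 * (real k powr (p/2) * s2 powr (p/2) + real k * mu))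
      = K0 * ((real k powr (-p) * real k powr (p/2)) * s2 powr (p/2) + (real k powr (-p) * real k) * mu)"
      by (simp only: algebra_simps)
    then show ?thesis unfolding a b .
  qed
  finally show ?thesis unfolding K0_def mu_def s2_def t_def by (meson ennreal_leI)
qed

theorem mainTheorem6:
  fixes M :: "'a measure" and N :: "'b measure"
    and X :: "'b \<Rightarrow> real" and Xa :: "nat \<Rightarrow> nat \<Rightarrow> 'a \<Rightarrow> real" and p :: real
  assumes "prob_space M" and "prob_space N"
    and "X \<in> borel_measurable N"
    and "integrable N (\<lambda>x. (X x)\<^sup>2)"
    and "prob_space.indep_vars M (\<lambda>_. borel) (\<lambda>(i, k). Xa i k) {(i, k). 1 \<le> i \<and> i \<le> k}"
    and "\<And>i k. 1 \<le> i \<Longrightarrow> i \<le> k \<Longrightarrow> distr M borel (Xa i k) = distr N borel X"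
    and "p > 2"
  shows "(\<integral>\<^sup>+ \<omega>. (\<Sum>n. ennreal ((\<bar>centered_trunc_sum M Xa (Suc n) \<omega>\<bar> / real (Suc n)) powr p)) \<partial>M) < \<infinity>"
proof -
  note A = assms
  interpret M: prob_space M by fact
  interpret N: prob_space N by fact
  have p: "p > 2" by fact
  have p0: "0 \<le> p" using p by simp
  have Xm[measurable]: "X \<in> borel_measurable N" by fact
  have X2: "integrable N (\<lambda>x. (X x)\<^sup>2)" by fact
  have Xam: "Xa i k \<in> borel_measurable M" if "1 \<le> i" "i \<le> k" for i k
    using A(5) that unfolding M.indep_vars_def by auto
  have tm[measurable]: "trunc_at k \<in> borel_measurable borel" for k
    unfolding trunc_at_def[abs_def] by measurable
  have Tm[measurable]: "centered_trunc_sum M Xa k \<in> borel_measurable M" for k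
    unfolding centered_trunc_sum_def[abs_def]
    by (intro borel_measurable_sum borel_measurable_diff borel_measurable_const measurable_compose[OF Xam tm]) auto
  define s2 where "s2 = (\<integral>x. (X x)\<^sup>2 \<partial>N)"
  define K0 where "K0 = Cp p * exp (Cp p)"
  have K00: "K0 \<ge> 0" unfolding K0_def Cp_def using p by (intro mult_nonneg_nonneg add_nonneg_nonneg) auto
  have s20: "0 \<le> s2" unfolding s2_def by (intro integral_nonneg_AE) auto
  define c where "c n = (\<integral>x. \<bar>trunc_at (Suc n) (X x)\<bar> powr p \<partial>N)" for n
  define r where "r n = K0 * (real (Suc n) powr (-(p/2)) * s2 powr (p/2) + 2 powr p * s2 powr (p/2) * real (Suc n) powr (1-p))" for n
  define u where "u n = K0 * 2 powr p * (real (Suc n) powr (1-p) * c n)" for n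
  have c0: "c n \<ge> 0" for n unfolding c_def by (intro integral_nonneg_AE) auto
  have r0: "r n \<ge> 0" for n unfolding r_def using K00 s20 by auto
  have u0: "u n \<ge> 0" for n unfolding u_def using K00 c0 by auto
  define f where "f n \<omega> = ennreal ((\<bar>centered_trunc_sum M Xa (Suc n) \<omega>\<bar> / real (Suc n)) powr p)" for n \<omega>
  have fm: "f n \<in> borel_measurable M" for n unfolding f_def by measurable
  have fb: "(\<integral>\<^sup>+ \<omega>. f n \<omega> \<partial>M) \<le> ennreal (r n) + ennreal (u n)" for n
  proof -
    have "(\<integral>\<^sup>+ \<omega>. f n \<omega> \<partial>M) \<le> ennreal (r n + u n)"
    proof -
      have eq: "Cp p * exp (Cp p) * (real (Suc n) powr (-(p/2)) * (\<integral>x. (X x)\<^sup>2 \<partial>N) powr (p/2)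
         + real (Suc n) powr (1-p) * (2 powr p * ((\<integral>x. \<bar>trunc_at (Suc n) (X x)\<bar> powr p \<partial>N) + (\<integral>x. (X x)\<^sup>2 \<partial>N) powr (p/2))))
         = r n + u n"
        unfolding r_def u_def K0_def c_def s2_def by (simp only: distrib_left distrib_right mult_ac)
      show ?thesis unfolding f_def using per_k[OF A(1-6) p, of "Suc n"] unfolding eq by simp
    qed
    then show ?thesis using r0 u0 by (simp add: ennreal_plus)
  qed
  have "(\<integral>\<^sup>+ \<omega>. (\<Sum>n. f n \<omega>) \<partial>M) = (\<Sum>n. \<integral>\<^sup>+ \<omega>. f n \<omega> \<partial>M)"
    by (rule nn_integral_suminf[OF fm])
  also have "\<dots> \<le> (\<Sum>n. ennreal (r n) + ennreal (u n))"
    by (intro suminf_le summableI fb)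
  also have "\<dots> = (\<Sum>n. ennreal (r n)) + (\<Sum>n. ennreal (u n))"
    by (rule suminf_add[symmetric]) (auto intro: summableI)
  finally have main: "(\<integral>\<^sup>+ \<omega>. (\<Sum>n. f n \<omega>) \<partial>M) \<le> (\<Sum>n. ennreal (r n)) + (\<Sum>n. ennreal (u n))" .
  have sp: "summable (\<lambda>n. real (Suc n) powr s)" if "s < -1" for s
    using summable_real_powr_iff[of s] that summable_Suc_iff[of "\<lambda>n. real n powr s"] by simp
  have R: "(\<Sum>n. ennreal (r n)) < \<infinity>"
  proof -
    have s1: "summable (\<lambda>n. real (Suc n) powr (-(p/2)))" by (rule sp) (use p in simp)
    have s2': "summable (\<lambda>n. real (Suc n) powr (1-p))" by (rule sp) (use p in simp)
    have "summable (\<lambda>n. real (Suc n) powr (-(p/2)) * s2 powr (p/2) + 2 powr p * s2 powr (p/2) * real (Suc n) powr (1-p))"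
      by (rule summable_add[OF summable_mult2[OF s1] summable_mult[OF s2']])
    then have "summable r" unfolding r_def by (rule summable_mult)
    then have "(\<Sum>n. ennreal (r n)) \<noteq> top" using r0 by (rule ennreal_suminf_neq_top)
    then show ?thesis by (simp add: less_top)
  qed
  define C where "C = 4/(3*(p-2)) * 4 powr (p-2)"
  have C0: "C \<ge> 0" unfolding C_def using p by simp
  define g where "g n x = ennreal (real (Suc n) powr (1-p) * \<bar>trunc_at (Suc n) (X x)\<bar> powr p)" for n x
  have gm: "g n \<in> borel_measurable N" for n unfolding g_def by measurable
  have gi: "ennreal (real (Suc n) powr (1-p) * c n) = (\<integral>\<^sup>+ x. g n x \<partial>N)" for n
  proof -
    have itp: "integrable N (\<lambda>x. \<bar>trunc_at (Suc n) (X x)\<bar> powr p)"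
      by (rule N.integrable_bnd[where B="real (Suc n) powr p"])
         (auto intro!: powr_mono2 simp: p0 trunc_at_def)
    then have "(\<integral>\<^sup>+ x. g n x \<partial>N) = ennreal (\<integral>x. real (Suc n) powr (1-p) * \<bar>trunc_at (Suc n) (X x)\<bar> powr p \<partial>N)"
      unfolding g_def by (intro nn_integral_eq_integral) auto
    then show ?thesis by (simp add: c_def)
  qed
  have intC: "integrable N (\<lambda>x. C * (1 + (X x)^2))" using X2 by auto
  have "(\<Sum>n. ennreal (real (Suc n) powr (1-p) * c n)) = (\<Sum>n. \<integral>\<^sup>+ x. g n x \<partial>N)"
    by (simp only: gi)
  also have "\<dots> = (\<integral>\<^sup>+ x. (\<Sum>n. g n x) \<partial>N)" by (rule nn_integral_suminf[OF gm, symmetric])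
  also have "\<dots> \<le> (\<integral>\<^sup>+ x. ennreal (C * (1 + (X x)^2)) \<partial>N)"
    by (intro nn_integral_mono) (use tail_bound[OF p] in \<open>simp add: g_def C_def\<close>)
  also have "\<dots> = ennreal (\<integral>x. C * (1 + (X x)^2) \<partial>N)"
    using intC C0 by (intro nn_integral_eq_integral) auto
  finally have G: "(\<Sum>n. ennreal (real (Suc n) powr (1-p) * c n)) < \<infinity>"
    by (simp add: le_less_trans)
  have U: "(\<Sum>n. ennreal (u n)) < \<infinity>"
  proof -
    have "(\<Sum>n. ennreal (u n)) = (\<Sum>n. ennreal (K0 * 2 powr p) * ennreal (real (Suc n) powr (1-p) * c n))"
      unfolding u_def using K00 c0 by (simp add: ennreal_mult mult.assoc)
    also have "\<dots> = ennreal (K0 * 2 powr p) * (\<Sum>n. ennreal (real (Suc n) powr (1-p) * c n))"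
      by (rule ennreal_suminf_cmult)
    finally show ?thesis using G by (simp add: ennreal_mult_less_top)
  qed
  have "(\<integral>\<^sup>+ \<omega>. (\<Sum>n. f n \<omega>) \<partial>M) < \<infinity>"
  proof -
    have "(\<Sum>n. ennreal (r n)) + (\<Sum>n. ennreal (u n)) < \<infinity>" using R U by (simp add: ennreal_add_less_top)
    then show ?thesis using main by (rule le_less_trans[rotated])
  qed
  then show ?thesis unfolding f_def .
qed

end
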